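(* Let $e\geq 1$, $n\geq 2$, and let $s\in G(e,e,n)$ be the reflection with reflecting hyperplane $z_i=\zeta z_j$ ($i\neq j$, $\zeta\in\mu_e$). The sign of the permutation induced by $s$ on the set of reflecting hyperplanes of $G(e,e,n)$ is $(-1)^{(n-2)e+(e-2)/2}=(-1)^{(e-2)/2}$ if $e$ is even, and $(-1)^{(n-2)e+(e-1)/2}=(-1)^{n+(e-1)/2}$ if $e$ is odd.
   Context: $\mu_e$ is the group of $e$-th roots of unity. $G(e,e,n)$ is the group of $n\times n$ monomial matrices with nonzero entries in $\mu_e$ whose product is $1$, acting on $\mathbb{C}^n$; its reflecting hyperplanes are $z_a=\xi z_b$ for $a<b$, $\xi\in\mu_e$. *)

theory Defs
  imports "HOL-Analysis.Analysis" "HOL-Combinatorics.Permutations"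
begin

text \<open>The group of e-th roots of unity.\<close>
definition mu :: "nat \<Rightarrow> complex set" where
  "mu e = {\<xi>. \<xi> ^ e = 1}"

text \<open>G(e,e,n): n x n monomial matrices (n = CARD('n)) with nonzero entries
  in mu e whose product (of the nonzero entries) is 1.\<close>
definition Geen :: "nat \<Rightarrow> (complex ^ 'n ^ 'n) set" where
  "Geen e = {M. (\<forall>i. \<exists>!j. M $ i $ j \<noteq> 0) \<and> (\<forall>j. \<exists>!i. M $ i $ j \<noteq> 0)
               \<and> (\<forall>i j. M $ i $ j \<noteq> 0 \<longrightarrow> M $ i $ j \<in> mu e)
               \<and> (\<Prod>i\<in>UNIV. \<Prod>j\<in>UNIV. if M $ i $ j = 0 then 1 else M $ i $ j) = 1}"

text \<open>The hyperplane z_a = xi z_b in C^n.\<close>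
definition hyp :: "'n \<Rightarrow> complex \<Rightarrow> 'n \<Rightarrow> (complex ^ 'n) set" where
  "hyp a \<xi> b = {z. z $ a = \<xi> * z $ b}"

text \<open>The reflecting hyperplanes of G(e,e,n): z_a = xi z_b, a \<noteq> b, xi in mu e.\<close>
definition refl_hyps :: "nat \<Rightarrow> (complex ^ 'n) set set" where
  "refl_hyps e = {hyp a \<xi> b | a b \<xi>. a \<noteq> b \<and> \<xi> \<in> mu e}"

text \<open>s is a reflection with reflecting hyperplane H: s is not the identity,
  has finite order, and its fixed-point set is exactly the hyperplane H.\<close>
definition reflection_with_hyperplane :: "complex ^ 'n ^ 'n \<Rightarrow> (complex ^ 'n) set \<Rightarrow> bool" where
  "reflection_with_hyperplane s H \<longleftrightarrow> s \<noteq> mat 1 \<and> (\<exists>m>0. (((**) s) ^^ m) (mat 1) = mat 1)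
      \<and> {z. s *v z = z} = H"

text \<open>The map induced by a matrix on sets of vectors (on hyperplanes).\<close>
definition hyp_action :: "complex ^ 'n ^ 'n \<Rightarrow> (complex ^ 'n) set \<Rightarrow> (complex ^ 'n) set" where
  "hyp_action s H = (\<lambda>z. s *v z) ` H"

end

theory Submission
  imports Defs
begin

lemma hyp_eq_iff:
  fixes a b c d :: "'n::finite" and \<xi> \<eta> :: complex
  assumes "a \<noteq> b" "c \<noteq> d" "\<xi> \<noteq> 0" "\<eta> \<noteq> 0"
  shows "hyp a \<xi> b = hyp c \<eta> d \<longleftrightarrow> (c = a \<and> d = b \<and> \<eta> = \<xi>) \<or> (c = b \<and> d = a \<and> \<eta> * \<xi> = 1)"
proof
  assume E: "hyp a \<xi> b = hyp c \<eta> d"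
  have mem: "z \<in> hyp a \<xi> b \<longleftrightarrow> z $ c = \<eta> * z $ d" for z
    using E by (simp add: hyp_def)
  have c: "c \<in> {a, b}"
  proof (rule ccontr)
    assume "c \<notin> {a,b}"
    hence "(axis c 1 :: complex ^ 'n) \<in> hyp a \<xi> b" by (auto simp: hyp_def axis_def)
    thus False using mem[of "axis c 1"] assms(2) by (simp add: axis_def)
  qed
  have d: "d \<in> {a, b}"
  proof (rule ccontr)
    assume "d \<notin> {a,b}"
    hence "(axis d 1 :: complex ^ 'n) \<in> hyp a \<xi> b" by (auto simp: hyp_def axis_def)
    thus False using mem[of "axis d 1"] assms(2,4) by (simp add: axis_def)
  qed
  define v :: "complex ^ 'n" where "v = (\<chi> k. if k = a then \<xi> else if k = b then 1 else 0)"
  have "v \<in> hyp a \<xi> b" using assms(1) by (simp add: v_def hyp_def)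
  hence "v $ c = \<eta> * v $ d" using mem by blast
  thus "(c = a \<and> d = b \<and> \<eta> = \<xi>) \<or> (c = b \<and> d = a \<and> \<eta> * \<xi> = 1)"
    using c d assms(1,2) by (auto simp: v_def)
next
  assume "(c = a \<and> d = b \<and> \<eta> = \<xi>) \<or> (c = b \<and> d = a \<and> \<eta> * \<xi> = 1)"
  thus "hyp a \<xi> b = hyp c \<eta> d"
  proof
    assume "c = a \<and> d = b \<and> \<eta> = \<xi>" thus ?thesis by simp
  next
    assume h: "c = b \<and> d = a \<and> \<eta> * \<xi> = 1"
    have "z $ a = \<xi> * z $ b \<longleftrightarrow> z $ b = \<eta> * z $ a" for z :: "complex ^ 'n"
    proof
      assume "z $ a = \<xi> * z $ b"
      hence "\<eta> * z $ a = (\<eta> * \<xi>) * z $ b" by simp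
      thus "z $ b = \<eta> * z $ a" using h by simp
    next
      assume "z $ b = \<eta> * z $ a"
      hence "\<xi> * z $ b = (\<eta> * \<xi>) * z $ a" by simp
      thus "z $ a = \<xi> * z $ b" using h by simp
    qed
    thus ?thesis using h by (auto simp: hyp_def)
  qed
qed

lemma sign_involution:
  assumes "finite {x. p x \<noteq> x}" "\<And>x. p (p x) = x"
  shows "sign p = (-1) ^ (card {x. p x \<noteq> x} div 2)"
  using assms
proof (induction "card {x. p x \<noteq> x}" arbitrary: p rule: less_induct)
  case less
  show ?case
  proof (cases "{x. p x \<noteq> x} = {}")
    case True
    hence "p = id" by (auto simp: fun_eq_iff)
    thus ?thesis using True by simp
  next
    case False
    then obtain x where x: "p x \<noteq> x" by auto
    define y where "y = p x"
    have py: "p y = x" using less.prems(2) y_def by simp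
    define q where "q = Transposition.transpose x y \<circ> p"
    have n1: "p z \<noteq> x" if "z \<noteq> y" for z
      using that less.prems(2)[of z] y_def by auto
    have n2: "p z \<noteq> y" if "z \<noteq> x" for z
      using that less.prems(2)[of z] less.prems(2)[of x] y_def by auto
    have qa: "q z = (if z = x \<or> z = y then z else p z)" for z
      using py y_def n1[of z] n2[of z] by (auto simp: q_def Transposition.transpose_def)
    have Sq: "{z. q z \<noteq> z} = {z. p z \<noteq> z} - {x, y}"
      using qa by auto
    have xy: "x \<in> {z. p z \<noteq> z}" "y \<in> {z. p z \<noteq> z}" "x \<noteq> y"
      using x py y_def by auto
    have cq: "card {z. q z \<noteq> z} + 2 = card {z. p z \<noteq> z}"
    proof -
      have "{x,y} \<subseteq> {z. p z \<noteq> z}" using xy by auto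
      hence "card ({z. p z \<noteq> z} - {x,y}) = card {z. p z \<noteq> z} - card {x,y}"
        by (intro card_Diff_subset) auto
      moreover have "card {x,y} = 2" using xy(3) by simp
      moreover have "card {x,y} \<le> card {z. p z \<noteq> z}"
        using \<open>{x,y} \<subseteq> _\<close> less.prems(1) by (intro card_mono) auto
      ultimately show ?thesis unfolding Sq by linarith
    qed
    have finq: "finite {z. q z \<noteq> z}" unfolding Sq using less.prems(1) by simp
    have invq: "q (q z) = z" for z using qa[of z] qa[of "p z"] n1[of z] n2[of z] less.prems(2)[of z] by auto
    have IH: "sign q = (-1) ^ (card {z. q z \<noteq> z} div 2)"
      using less.hyps[of q] cq finq invq by simp
    have permq: "permutation q"
    proof -
      have "bij_betw q {z. q z \<noteq> z} {z. q z \<noteq> z}"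
        by (rule bij_betw_byWitness[where f'=q]) (auto simp: invq image_subset_iff)
      hence "q permutes {z. q z \<noteq> z}" by (intro bij_imp_permutes) auto
      thus ?thesis using finq permutes_imp_permutation by blast
    qed
    have "p = Transposition.transpose x y \<circ> q"
      by (auto simp: q_def fun_eq_iff)
    hence "sign p = sign (Transposition.transpose x y) * sign q"
      using permq by (simp add: sign_compose permutation_swap_id)
    also have "\<dots> = - ((-1) ^ (card {z. q z \<noteq> z} div 2))" using IH xy by (simp add: sign_swap_id)
    also have "\<dots> = (-1) ^ (card {z. p z \<noteq> z} div 2)"
      using cq[symmetric] by simp
    finally show ?thesis .
  qed
qed


lemma s_explicit:
  fixes s :: "complex^'n^'n" and i j :: 'n
  assumes ij: "i \<noteq> j" and z0: "\<zeta> \<noteq> 0"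
    and rows: "\<forall>a. \<exists>!b. s $ a $ b \<noteq> 0" and cols: "\<forall>b. \<exists>!a. s $ a $ b \<noteq> 0"
    and ns: "s \<noteq> mat 1" and fx: "{z. s *v z = z} = hyp i \<zeta> j"
  shows "s *v z = (\<chi> k. if k = i then \<zeta> * z $ j else if k = j then z $ i / \<zeta> else z $ k)"
proof -
  have fixv: "s *v z = z" if "z \<in> hyp i \<zeta> j" for z using that fx by blast
  have rowU: "b = c" if "s $ a $ b \<noteq> 0" "s $ a $ c \<noteq> 0" for a b c using rows that by metis
  have colU: "a = c" if "s $ a $ b \<noteq> 0" "s $ c $ b \<noteq> 0" for a b c using cols that by metis
  have colk: "s $ a $ k = (if a = k then 1 else 0)" if "k \<noteq> i" "k \<noteq> j" for a k
  proof -
    have "(axis k 1 :: complex ^ 'n) \<in> hyp i \<zeta> j" using that by (simp add: hyp_def axis_def)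
    hence "(s *v axis k 1) $ a = axis k 1 $ a" using fixv by simp
    thus ?thesis by (simp add: matrix_vector_mult_def axis_def if_distrib[where f="\<lambda>x. _ * x"] cong: if_cong)
  qed
  define v :: "complex ^ 'n" where "v = (\<chi> k. if k = i then \<zeta> else if k = j then 1 else 0)"
  have "v \<in> hyp i \<zeta> j" using ij by (simp add: v_def hyp_def)
  hence sv: "(s *v v) $ a = v $ a" for a using fixv by simp
  have svc: "(s *v v) $ a = s $ a $ i * \<zeta> + s $ a $ j" for a
  proof -
    have "(s *v v) $ a = (\<Sum>b\<in>UNIV. s $ a $ b * v $ b)" by (simp add: matrix_vector_mult_def)
    also have "\<dots> = (\<Sum>b\<in>{i,j}. s $ a $ b * v $ b)"
      by (rule sum.mono_neutral_right) (auto simp: v_def)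
    also have "\<dots> = s $ a $ i * \<zeta> + s $ a $ j" using ij by (simp add: v_def)
    finally show ?thesis .
  qed
  have ri: "s $ i $ i * \<zeta> + s $ i $ j = \<zeta>" using sv[of i] svc[of i] by (simp add: v_def)
  have rj: "s $ j $ i * \<zeta> + s $ j $ j = 1" using sv[of j] svc[of j] ij by (simp add: v_def)
  have rowa: "s $ a $ b = (if b = a then 1 else 0)" if "a \<noteq> i" "a \<noteq> j" for a b
  proof (cases "b = a")
    case True thus ?thesis using colk that by simp
  next
    case False
    have "s $ a $ a \<noteq> 0" using colk that by simp
    thus ?thesis using rowU[of a b a] False by auto
  qed
  have ent: "s $ a $ b = (if a = i then (if b = j then \<zeta> else 0)
        else if a = j then (if b = i then 1 / \<zeta> else 0) else (if b = a then 1 else 0))" for a b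
  proof (cases "s $ i $ i = 0")
    case False
    have "s $ i $ j = 0" using rowU[of i i j] False ij by auto
    hence sii: "s $ i $ i = 1" using ri z0 by simp
    have "s $ j $ i = 0" using colU[of i i j] False ij by auto
    hence sjj: "s $ j $ j = 1" using rj by simp
    have "s = mat 1"
    proof -
      have "s $ a $ b = (if a = b then 1 else 0)" for a b
        using sii sjj \<open>s $ i $ j = 0\<close> \<open>s $ j $ i = 0\<close> colk rowa by (cases "a = i"; cases "a = j"; cases "b = i"; cases "b = j") auto
      thus ?thesis by (simp add: vec_eq_iff mat_def)
    qed
    thus ?thesis using ns by simp
  next
    case True
    hence sij: "s $ i $ j = \<zeta>" using ri by simp
    hence sjj: "s $ j $ j = 0" using colU[of i j j] z0 ij by auto
    hence sji: "s $ j $ i = 1 / \<zeta>" using rj z0 by (simp add: field_simps)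
    show ?thesis
      using True sij sjj sji colk rowa ij by (cases "a = i"; cases "a = j"; cases "b = i"; cases "b = j") auto
  qed
  show ?thesis
  proof (subst vec_eq_iff, intro allI)
    fix a
    have "(s *v z) $ a = (\<Sum>b\<in>UNIV. s $ a $ b * z $ b)" by (simp add: matrix_vector_mult_def)
    also have "\<dots> = (if a = i then \<zeta> * z $ j else if a = j then z $ i / \<zeta> else z $ a)"
      using ij by (simp add: ent if_distrib[where f="\<lambda>x. x * _"] cong: if_cong)
    finally show "(s *v z) $ a = (\<chi> k. if k = i then \<zeta> * z $ j else if k = j then z $ i / \<zeta> else z $ k) $ a" by simp
  qed
qed


lemma neg1_pow_eq: "even a = even b \<Longrightarrow> (-1::int) ^ a = (-1) ^ b"
  by (cases "even a") (auto simp: neg_one_even_power neg_one_odd_power)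

theorem proposition3p9:
  fixes e :: nat and s :: "complex ^ 'n ^ 'n" and i j :: 'n and \<zeta> :: complex
  assumes "e \<ge> 1" and "CARD('n) \<ge> 2"
    and "i \<noteq> j" and "\<zeta> \<in> mu e"
    and "s \<in> Geen e"
    and "reflection_with_hyperplane s (hyp i \<zeta> j)"
  shows "restrict_id (hyp_action s) (refl_hyps e) permutes (refl_hyps e)
    \<and> sign_on (refl_hyps e) (hyp_action s) =
      (if even e then (-1) ^ ((CARD('n) - 2) * e + (e - 2) div 2)
                 else (-1) ^ ((CARD('n) - 2) * e + (e - 1) div 2))
    \<and> sign_on (refl_hyps e) (hyp_action s) =
      (if even e then (-1) ^ ((e - 2) div 2)
                 else (-1) ^ (CARD('n) + (e - 1) div 2))"
proof -
  note ij = assms(3)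
  have mu0: "\<xi> \<noteq> 0" if "\<xi> \<in> mu e" for \<xi> using that assms(1) by (cases e) (auto simp: mu_def)
  have mumult: "\<xi> * \<eta> \<in> mu e" if "\<xi> \<in> mu e" "\<eta> \<in> mu e" for \<xi> \<eta>
    using that by (simp add: mu_def power_mult_distrib)
  have mudiv: "\<xi> / \<eta> \<in> mu e" if "\<xi> \<in> mu e" "\<eta> \<in> mu e" for \<xi> \<eta>
    using that by (simp add: mu_def power_divide)
  have mu1: "1 \<in> mu e" by (simp add: mu_def)
  have z0: "\<zeta> \<noteq> 0" using mu0 assms(4) .
  define f :: "complex ^ 'n \<Rightarrow> complex ^ 'n" where
    "f = (\<lambda>z. \<chi> k. if k = i then \<zeta> * z $ j else if k = j then z $ i / \<zeta> else z $ k)"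
  have fc: "f z $ k = (if k = i then \<zeta> * z $ j else if k = j then z $ i / \<zeta> else z $ k)" for z k
    by (simp add: f_def)
  have ff: "f (f z) = z" for z using z0 ij by (simp add: vec_eq_iff fc)
  have sv: "s *v z = f z" for z
    unfolding f_def
    by (rule s_explicit) (use ij z0 assms(5,6) in \<open>auto simp: Geen_def reflection_with_hyperplane_def\<close>)
  have act: "hyp_action s H = f ` H" for H by (simp add: hyp_action_def sv)
  have gen: "hyp_action s (hyp a \<xi> b) = {w. f w $ a = \<xi> * f w $ b}" for a \<xi> b
  proof -
    have "w \<in> f ` hyp a \<xi> b \<longleftrightarrow> f w \<in> hyp a \<xi> b" for w
      by (metis ff image_eqI imageE)
    thus ?thesis unfolding act by (auto simp: hyp_def)
  qed
  have act_ij: "hyp_action s (hyp i \<xi> j) = hyp j (\<xi> / \<zeta>^2) i" for \<xi>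
    unfolding gen using ij z0 by (auto simp: hyp_def fc field_simps power2_eq_square)
  have act_ji: "hyp_action s (hyp j \<xi> i) = hyp i (\<xi> * \<zeta>^2) j" for \<xi>
    unfolding gen using ij z0 by (auto simp: hyp_def fc field_simps power2_eq_square)
  have act_out: "hyp_action s (hyp a \<xi> b) = hyp a \<xi> b" if "a \<notin> {i,j}" "b \<notin> {i,j}" for a b \<xi>
    unfolding gen using that by (auto simp: hyp_def fc)
  have act_iA: "hyp_action s (hyp i \<xi> k) = hyp j (\<xi> / \<zeta>) k" if "k \<notin> {i,j}" for k \<xi>
    unfolding gen using that ij z0 by (auto simp: hyp_def fc field_simps)
  have act_jA: "hyp_action s (hyp j \<xi> k) = hyp i (\<xi> * \<zeta>) k" if "k \<notin> {i,j}" for k \<xi>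
    unfolding gen using that ij z0 by (auto simp: hyp_def fc field_simps)

  define S :: "(complex ^ 'n) set set" where "S = refl_hyps e"
  define act where "act = hyp_action s"
  have actact: "act (act H) = H" for H unfolding act_def act using ff by (auto simp: image_image)
  have finmu: "finite (mu e)" using card_roots_unity_eq[of e] assms(1) unfolding mu_def
    by (intro card_ge_0_finite) auto
  have cardmu: "card (mu e) = e" using card_roots_unity_eq[of e] assms(1) unfolding mu_def by auto
  have finS: "finite S"
  proof -
    have "S \<subseteq> (\<lambda>(a,b,\<xi>). hyp a \<xi> b) ` (UNIV \<times> UNIV \<times> mu e)"
      by (auto simp: S_def refl_hyps_def)
    moreover have "finite ((\<lambda>(a,b,\<xi>). hyp a \<xi> b) ` (UNIV \<times> UNIV \<times> mu e))"
      using finmu by simp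
    ultimately show ?thesis by (rule finite_subset)
  qed
  have hyp_swap: "hyp a \<xi> b = hyp b (1 / \<xi>) a" if "a \<noteq> b" "\<xi> \<noteq> 0" for a b :: 'n and \<xi>
    using hyp_eq_iff[of a b b a \<xi> "1/\<xi>"] that by simp
  have inS: "hyp a \<xi> b \<in> S" if "a \<noteq> b" "\<xi> \<in> mu e" for a b \<xi>
    using that by (auto simp: S_def refl_hyps_def)
  have actS: "act H \<in> S" if HS0: "H \<in> S" for H
  proof -
    obtain a b \<xi> where H: "H = hyp a \<xi> b" "a \<noteq> b" "\<xi> \<in> mu e" using HS0 by (auto simp: S_def refl_hyps_def)
    have zm: "\<zeta>^2 \<in> mu e" using mumult[OF assms(4) assms(4)] by (simp add: power2_eq_square)
    have m: "1/\<xi> \<in> mu e" using mudiv[OF mu1 H(3)] .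
    have H': "H = hyp b (1/\<xi>) a" using hyp_swap[OF H(2) mu0[OF H(3)]] H(1) by simp
    consider "a = i" "b = j" | "a = j" "b = i" | "a \<in> {i,j}" "b \<notin> {i,j}" | "a \<notin> {i,j}" "b \<in> {i,j}"
      | "a \<notin> {i,j}" "b \<notin> {i,j}" using H(2) by blast
    thus ?thesis
    proof cases
      case 1
      hence "act H = hyp j (\<xi> / \<zeta>^2) i" using H(1) by (simp add: act_def act_ij)
      thus ?thesis using inS[of j i "\<xi> / \<zeta>^2"] ij mudiv[OF H(3) zm] by auto
    next
      case 2
      hence "act H = hyp i (\<xi> * \<zeta>^2) j" using H(1) by (simp add: act_def act_ji)
      thus ?thesis using inS[of i j "\<xi> * \<zeta>^2"] ij mumult[OF H(3) zm] by auto
    next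
      case 3
      show ?thesis
      proof (cases "a = i")
        case True
        hence "act H = hyp j (\<xi> / \<zeta>) b" using H(1) 3 by (simp add: act_def act_iA)
        thus ?thesis using inS[of j b "\<xi> / \<zeta>"] 3 mudiv[OF H(3) assms(4)] by auto
      next
        case False
        hence "a = j" using 3 by simp
        hence "act H = hyp i (\<xi> * \<zeta>) b" using H(1) 3 by (simp add: act_def act_jA)
        thus ?thesis using inS[of i b "\<xi> * \<zeta>"] 3 mumult[OF H(3) assms(4)] by auto
      qed
    next
      case 4
      show ?thesis
      proof (cases "b = i")
        case True
        hence "act H = hyp j (1/\<xi> / \<zeta>) a" using H' 4 by (simp add: act_def act_iA)
        thus ?thesis using inS[of j a "1/\<xi> / \<zeta>"] 4 mudiv[OF m assms(4)] by auto
      next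
        case False
        hence "b = j" using 4 by simp
        hence "act H = hyp i (1/\<xi> * \<zeta>) a" using H' 4 by (simp add: act_def act_jA)
        thus ?thesis using inS[of i a "1/\<xi> * \<zeta>"] 4 mumult[OF m assms(4)] by auto
      qed
    next
      case 5
      hence "act H = H" using H(1) by (simp add: act_def act_out)
      thus ?thesis using HS0 by simp
    qed
  qed
  have bij: "bij_betw act S S"
    by (rule bij_betw_byWitness[where f'=act]) (use actact actS in auto)
  have perm: "restrict_id act S permutes S" using bij by (rule permutes_restrict_id)

  define r where "r = restrict_id act S"
  define N where "N = {H. r H \<noteq> H}"
  have rS: "r H = (if H \<in> S then act H else H)" for H by (simp add: r_def restrict_id_def)
  have N_eq: "N = {H\<in>S. act H \<noteq> H}" unfolding N_def rS by auto
  have finN: "finite N" unfolding N_eq using finS by simp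
  have rr: "r (r H) = H" for H by (simp add: rS actS actact)
  have "sign_on S act = sign r" by (simp add: sign_on_def r_def)
  also have "sign r = (-1) ^ (card {x. r x \<noteq> x} div 2)"
    by (rule sign_involution) (use finN[unfolded N_def] rr in auto)
  finally have sgn: "sign_on S act = (-1) ^ (card N div 2)" unfolding N_def .
  define K where "K = UNIV - {i,j}"
  define A where "A = (\<lambda>(a,\<xi>,k). hyp a \<xi> k) ` ({i,j} \<times> mu e \<times> K)"
  define B where "B = (\<lambda>\<xi>. hyp i \<xi> j) ` {\<xi>\<in>mu e. \<xi>^2 \<noteq> \<zeta>^2}"
  have zz: "\<zeta>^2 \<noteq> 0" using z0 by simp
  have NAB: "N = A \<union> B"
  proof
    show "N \<subseteq> A \<union> B"
    proof
      fix H assume "H \<in> N"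
      hence HS: "H \<in> S" and Hn: "act H \<noteq> H" by (auto simp: N_eq)
      obtain a b \<xi> where H: "H = hyp a \<xi> b" "a \<noteq> b" "\<xi> \<in> mu e" using HS by (auto simp: S_def refl_hyps_def)
      have x0: "\<xi> \<noteq> 0" using mu0 H(3) .
      show "H \<in> A \<union> B"
      proof (cases "a \<in> {i,j}")
        case True
        show ?thesis
        proof (cases "b \<in> {i,j}")
          case True
          with \<open>a \<in> {i,j}\<close> H(2) have "(a = i \<and> b = j) \<or> (a = j \<and> b = i)" by auto
          thus ?thesis
          proof
            assume ab: "a = i \<and> b = j"
            have "\<xi>^2 \<noteq> \<zeta>^2"
            proof
              assume "\<xi>^2 = \<zeta>^2"
              hence "(\<xi> / \<zeta>^2) * \<xi> = 1" using zz by (simp add: power2_eq_square field_simps)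
              hence e1: "hyp i \<xi> j = hyp j (\<xi> / \<zeta>^2) i" using hyp_eq_iff[of i j j i \<xi> "\<xi> / \<zeta>^2"] ij x0 zz
                by simp
              have "act H = hyp j (\<xi> / \<zeta>^2) i" using ab H(1) by (simp add: act_def act_ij)
              hence "act H = H" using e1 ab H(1) by simp
              thus False using Hn by simp
            qed
            thus ?thesis using ab H by (auto simp: B_def)
          next
            assume ab: "a = j \<and> b = i"
            have H': "H = hyp i (1/\<xi>) j" using hyp_swap[OF H(2) x0] H(1) ab by simp
            have "(1/\<xi>)^2 \<noteq> \<zeta>^2"
            proof
              assume "(1/\<xi>)^2 = \<zeta>^2"
              hence "(\<xi> * \<zeta>^2) * \<xi> = 1" using x0 by (simp add: power2_eq_square field_simps)
              hence e1: "hyp j \<xi> i = hyp i (\<xi> * \<zeta>^2) j" using hyp_eq_iff[of j i i j \<xi> "\<xi> * \<zeta>^2"] ij x0 zz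
                by simp
              have "act H = hyp i (\<xi> * \<zeta>^2) j" using ab H(1) by (simp add: act_def act_ji)
              hence "act H = H" using e1 ab H(1) by simp
              thus False using Hn by simp
            qed
            thus ?thesis using H' mudiv[OF mu1 H(3)] by (auto simp: B_def)
          qed
        next
          case False
          thus ?thesis using \<open>a \<in> {i,j}\<close> H by (auto simp: A_def K_def)
        qed
      next
        case False
        show ?thesis
        proof (cases "b \<in> {i,j}")
          case True
          have H': "H = hyp b (1/\<xi>) a" using hyp_swap[OF H(2) x0] H(1) by simp
          have m: "1/\<xi> \<in> mu e" using mudiv[OF mu1 H(3)] .
          show ?thesis using True False H' m unfolding A_def K_def by auto
        next
          case False
          hence "act H = H" using \<open>a \<notin> {i,j}\<close> H act_out by (simp add: act_def)
          thus ?thesis using Hn by simp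
        qed
      qed
    qed
  next
    show "A \<union> B \<subseteq> N"
    proof
      fix H assume "H \<in> A \<union> B"
      thus "H \<in> N"
      proof
        assume "H \<in> A"
        then obtain a \<xi> k where H: "H = hyp a \<xi> k" "a \<in> {i,j}" "\<xi> \<in> mu e" "k \<notin> {i,j}"
          by (auto simp: A_def K_def)
        have x0: "\<xi> \<noteq> 0" using mu0 H(3) .
        have HS: "H \<in> S" using H by (auto simp: S_def refl_hyps_def)
        have "act H \<noteq> H"
        proof (cases "a = i")
          case True
          have "hyp j (\<xi> / \<zeta>) k \<noteq> hyp i \<xi> k"
            using hyp_eq_iff[of j k i k "\<xi> / \<zeta>" \<xi>] H ij x0 z0 by auto
          thus ?thesis using True H by (simp add: act_def act_iA)
        next
          case False
          hence aj: "a = j" using H by auto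
          have "hyp i (\<xi> * \<zeta>) k \<noteq> hyp j \<xi> k"
            using hyp_eq_iff[of i k j k "\<xi> * \<zeta>" \<xi>] H ij x0 z0 by auto
          thus ?thesis using aj H by (simp add: act_def act_jA)
        qed
        thus "H \<in> N" using HS by (simp add: N_eq)
      next
        assume "H \<in> B"
        then obtain \<xi> where H: "H = hyp i \<xi> j" "\<xi> \<in> mu e" "\<xi>^2 \<noteq> \<zeta>^2" by (auto simp: B_def)
        have x0: "\<xi> \<noteq> 0" using mu0 H(2) .
        have HS: "H \<in> S" using H ij by (auto simp: S_def refl_hyps_def)
        have "hyp j (\<xi> / \<zeta>^2) i \<noteq> hyp i \<xi> j"
        proof
          assume "hyp j (\<xi> / \<zeta>^2) i = hyp i \<xi> j"
          hence "\<xi> * (\<xi> / \<zeta>^2) = 1" using hyp_eq_iff[of j i i j "\<xi> / \<zeta>^2" \<xi>] ij x0 zz by auto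
          hence "\<xi>^2 = \<zeta>^2" using zz by (simp add: power2_eq_square field_simps)
          thus False using H(3) by simp
        qed
        hence "act H \<noteq> H" using H by (simp add: act_def act_ij)
        thus "H \<in> N" using HS by (simp add: N_eq)
      qed
    qed
  qed

  have disj: "A \<inter> B = {}"
  proof -
    have "hyp a \<xi> k \<noteq> hyp i \<eta> j" if "k \<notin> {i,j}" "a \<in> {i,j}" "\<xi> \<in> mu e" "\<eta> \<in> mu e" for a \<xi> k \<eta>
      using hyp_eq_iff[of a k i j \<xi> \<eta>] that ij mu0 by auto
    thus ?thesis by (auto simp: A_def B_def K_def)
  qed
  have cardK: "card K = CARD('n) - 2"
    using ij by (simp add: K_def card_Diff_subset)
  have cardA: "card A = 2 * e * (CARD('n) - 2)"
  proof -
    have "inj_on (\<lambda>(a,\<xi>,k). hyp a \<xi> k) ({i,j} \<times> mu e \<times> K)"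
    proof (rule inj_onI)
      fix x y assume hx: "x \<in> {i,j} \<times> mu e \<times> K" and hy: "y \<in> {i,j} \<times> mu e \<times> K"
        and hxy: "(\<lambda>(a,\<xi>,k). hyp a \<xi> k) x = (\<lambda>(a,\<xi>,k). hyp a \<xi> k) y"
      obtain a \<xi> k where x: "x = (a,\<xi>,k)" by (metis prod_cases3)
      obtain a' \<xi>' k' where y: "y = (a',\<xi>',k')" by (metis prod_cases3)
      have h: "a \<in> {i,j}" "\<xi> \<in> mu e" "k \<notin> {i,j}" "a' \<in> {i,j}" "\<xi>' \<in> mu e" "k' \<notin> {i,j}"
        "hyp a \<xi> k = hyp a' \<xi>' k'" using hx hy hxy x y by (auto simp: K_def)
      have "a \<noteq> k" "a' \<noteq> k'" using h by auto
      hence "(a' = a \<and> k' = k \<and> \<xi>' = \<xi>) \<or> (a' = k \<and> k' = a \<and> \<xi>' * \<xi> = 1)"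
        using hyp_eq_iff[of a k a' k' \<xi> \<xi>'] mu0 h by blast
      hence "a' = a \<and> k' = k \<and> \<xi>' = \<xi>" using h by blast
      thus "x = y" using x y by simp
    qed
    hence "card A = card ({i,j} \<times> mu e \<times> K)" unfolding A_def by (rule card_image)
    also have "\<dots> = 2 * e * (CARD('n) - 2)" using ij cardmu cardK by (simp add: card_cartesian_product)
    finally show ?thesis .
  qed
  have nz: "-\<zeta> \<in> mu e \<longleftrightarrow> even e"
  proof -
    have "(-\<zeta>)^e = (-1)^e * \<zeta>^e" by (rule power_minus)
    hence "(-\<zeta>)^e = (-1)^e" using assms(4) by (simp add: mu_def)
    thus ?thesis by (cases "even e") (auto simp: mu_def neg_one_even_power neg_one_odd_power)
  qed
  have sq: "{\<xi>\<in>mu e. \<xi>^2 = \<zeta>^2} = (if even e then {\<zeta>, -\<zeta>} else {\<zeta>})"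
  proof -
    have "{\<xi>\<in>mu e. \<xi>^2 = \<zeta>^2} = {\<xi>\<in>mu e. \<xi> = \<zeta> \<or> \<xi> = -\<zeta>}" by (simp add: power2_eq_iff)
    also have "\<dots> = (if even e then {\<zeta>, -\<zeta>} else {\<zeta>})"
      using nz assms(4) by (cases "even e") auto
    finally show ?thesis .
  qed
  have cardB: "card B = e - (if even e then 2 else 1)"
  proof -
    have "inj_on (\<lambda>\<xi>. hyp i \<xi> j) {\<xi>\<in>mu e. \<xi>^2 \<noteq> \<zeta>^2}"
      by (rule inj_onI) (use hyp_eq_iff[of i j i j] ij mu0 in auto)
    hence "card B = card {\<xi>\<in>mu e. \<xi>^2 \<noteq> \<zeta>^2}" unfolding B_def by (rule card_image)
    also have "{\<xi>\<in>mu e. \<xi>^2 \<noteq> \<zeta>^2} = mu e - {\<xi>\<in>mu e. \<xi>^2 = \<zeta>^2}" by auto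
    also have "card \<dots> = e - card {\<xi>\<in>mu e. \<xi>^2 = \<zeta>^2}"
      using finmu cardmu by (subst card_Diff_subset) auto
    also have "card {\<xi>\<in>mu e. \<xi>^2 = \<zeta>^2} = (if even e then 2 else 1)"
      unfolding sq using z0 by auto
    finally show ?thesis .
  qed
  have cardN: "card N = 2 * e * (CARD('n) - 2) + (e - (if even e then 2 else 1))"
    unfolding NAB using disj cardA cardB finN NAB
    by (subst card_Un_disjoint) auto

  have ex: "card N div 2 = (if even e then (CARD('n)-2)*e + (e-2) div 2 else (CARD('n)-2)*e + (e-1) div 2)"
  proof (cases "even e")
    case True
    have e2: "2 * ((e-2) div 2) = e - 2" using True by presburger
    have "card N = 2 * ((CARD('n)-2)*e + (e-2) div 2)"
      unfolding cardN using True e2 by (simp add: algebra_simps)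
    thus ?thesis using True by simp
  next
    case False
    have e2: "2 * ((e-1) div 2) = e - 1" using False by presburger
    have "card N = 2 * ((CARD('n)-2)*e + (e-1) div 2)"
      unfolding cardN using False e2 by (simp add: algebra_simps)
    thus ?thesis using False by simp
  qed
  have s1: "sign_on (refl_hyps e) (hyp_action s) =
      (if even e then (-1) ^ ((CARD('n) - 2) * e + (e - 2) div 2)
                 else (-1) ^ ((CARD('n) - 2) * e + (e - 1) div 2))"
    using sgn ex unfolding S_def act_def by simp
  have en: "even (CARD('n) - 2) = even (CARD('n))" using assms(2) by presburger
  have s2: "(if even e then (-1::int) ^ ((CARD('n) - 2) * e + (e - 2) div 2)
                 else (-1) ^ ((CARD('n) - 2) * e + (e - 1) div 2)) =
      (if even e then (-1) ^ ((e - 2) div 2)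
                 else (-1) ^ (CARD('n) + (e - 1) div 2))"
    using assms(2) by (cases "even e") (auto intro!: neg1_pow_eq simp: en)
  show ?thesis using perm s1 s2 unfolding S_def act_def by simp
qed

end
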